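(* Let $(\mathcal{X},d)$ be a finite metric space with initial forest given by a partition $\mathcal{P}=\{P_1,\dots,P_t\}$ and spanning trees $T_i$ on the parts with edge union $E_t$, and let $\gamma=\gamma(\mathcal{P})$ be its overlap parameter. Let $\textsf{MFC-Approx}$ be the algorithm $\textsf{MultiRepMFC}(R)$ where each $R_i=\{r_i\}$ consists of a single arbitrary point $r_i\in P_i$. Then $\textsf{MFC-Approx}$ returns a spanning tree of weight at most $2$ times the optimal MFC value (a 2-approximation for MFC) and at most $2\gamma$ times the weight of a minimum spanning tree of $G_{\mathcal{X}}$ (a $2\gamma$-approximation for metric MST).
   Context: $(\mathcal{X},d)$ is a finite metric space and $G_{\mathcal{X}}$ is the complete graph on $\mathcal{X}$ with edge weights $w_{\mathcal{X}}(u,v)=d(u,v)$; for an edge set $F$, $w_{\mathcal{X}}(F)=\sum_{e\in F}w_{\mathcal{X}}(e)$. For $A,B\subseteq\mathcal{X}$, $d(A,B)=\min_{a\in A,b\in B}d(a,b)$. An initial forest consists of a partition $\mathcal{P}=\{P_1,\dots,P_t\}$ of $\mathcal{X}$ and, for each $i$, a spanning tree $T_i$ of the complete graph on $P_i$; $E_t$ is the union of their edge sets. The Metric Forest Completion (MFC) problem: find a minimum-weight spanning tree of $G_{\mathcal{X}}$ containing $E_t$. Overlap parameter: with $\mathcal{T}_{\mathcal{X}}$ the set of minimum spanning trees of $G_{\mathcal{X}}$ and $T(\mathcal{P})$ the edges of $T$ with both endpoints in the same part, $\gamma(\mathcal{P})=w_{\mathcal{X}}(E_t)/\max_{T\in\mathcal{T}_{\mathcal{X}}}w_{\mathcal{X}}(T(\mathcal{P}))$.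 Algorithm $\textsf{MultiRepMFC}(R)$, for nonempty $R_i\subseteq P_i$: for each pair $i\ne j$ set $\hat w(v_i,v_j)=\min\{d(P_i,R_j),d(P_j,R_i)\}$ and record a point pair attaining it; compute a minimum spanning tree of the complete graph on $v_1,\dots,v_t$ with weights $\hat w$; return $E_t$ together with the recorded point pairs of the edges of this tree. *)

theory Defs
  imports Complex_Main
begin

definition metric_on :: "'a set \<Rightarrow> ('a \<Rightarrow> 'a \<Rightarrow> real) \<Rightarrow> bool" where
  "metric_on X d \<longleftrightarrow>
     (\<forall>x\<in>X. \<forall>y\<in>X. d x y \<ge> 0 \<and> (d x y = 0 \<longleftrightarrow> x = y) \<and> d x y = d y x) \<and>
     (\<forall>x\<in>X. \<forall>y\<in>X. \<forall>z\<in>X. d x z \<le> d x y + d y z)"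

definition edges_on :: "'b set \<Rightarrow> 'b set set" where
  "edges_on V = {e. \<exists>u v. u \<in> V \<and> v \<in> V \<and> u \<noteq> v \<and> e = {u, v}}"

text \<open>Weight of an undirected edge {u,v} given a symmetric weight function f.\<close>
definition edge_cost :: "('b \<Rightarrow> 'b \<Rightarrow> real) \<Rightarrow> 'b set \<Rightarrow> real" where
  "edge_cost f e = (THE r. \<exists>u v. e = {u, v} \<and> r = f u v)"

definition weight :: "('b set \<Rightarrow> real) \<Rightarrow> 'b set set \<Rightarrow> real" where
  "weight c F = (\<Sum>e\<in>F. c e)"

definition adj :: "'b set set \<Rightarrow> ('b \<times> 'b) set" where
  "adj F = {(u, v). {u, v} \<in> F}"

definition connected_by :: "'b set \<Rightarrow> 'b set set \<Rightarrow> bool" where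
  "connected_by V F \<longleftrightarrow> (\<forall>u\<in>V. \<forall>v\<in>V. (u, v) \<in> (adj F)\<^sup>*)"

definition spanning_tree :: "'b set \<Rightarrow> 'b set set \<Rightarrow> bool" where
  "spanning_tree V F \<longleftrightarrow> F \<subseteq> edges_on V \<and> connected_by V F \<and>
     (\<forall>e\<in>F. \<not> connected_by V (F - {e}))"

definition is_mst :: "'b set \<Rightarrow> ('b set \<Rightarrow> real) \<Rightarrow> 'b set set \<Rightarrow> bool" where
  "is_mst V c F \<longleftrightarrow> spanning_tree V F \<and> (\<forall>F'. spanning_tree V F' \<longrightarrow> weight c F \<le> weight c F')"

definition setdist :: "('a \<Rightarrow> 'a \<Rightarrow> real) \<Rightarrow> 'a set \<Rightarrow> 'a set \<Rightarrow> real" where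
  "setdist d A B = Min {d a b | a b. a \<in> A \<and> b \<in> B}"

definition intra_edges :: "(nat \<Rightarrow> 'a set) \<Rightarrow> nat \<Rightarrow> 'a set set \<Rightarrow> 'a set set" where
  "intra_edges P t T = {e \<in> T. \<exists>i<t. e \<subseteq> P i}"

definition overlap :: "'a set \<Rightarrow> ('a \<Rightarrow> 'a \<Rightarrow> real) \<Rightarrow> (nat \<Rightarrow> 'a set) \<Rightarrow> nat \<Rightarrow> 'a set set \<Rightarrow> real" where
  "overlap X d P t E = weight (edge_cost d) E /
     Max {weight (edge_cost d) (intra_edges P t T) | T. is_mst X (edge_cost d) T}"

definition rep_weight :: "('a \<Rightarrow> 'a \<Rightarrow> real) \<Rightarrow> (nat \<Rightarrow> 'a set) \<Rightarrow> (nat \<Rightarrow> 'a set) \<Rightarrow> nat \<Rightarrow> nat \<Rightarrow> real" where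
  "rep_weight d P R i j = min (setdist d (P i) (R j)) (setdist d (P j) (R i))"

text \<open>Output of MultiRepMFC(R): for a choice pr of recorded attaining point pairs (one per
  unordered index pair) and a minimum spanning tree H of the contracted complete graph on
  {0..<t}, the algorithm returns E_t together with the recorded pairs of the edges of H.\<close>
definition valid_recorded_pairs ::
  "('a \<Rightarrow> 'a \<Rightarrow> real) \<Rightarrow> (nat \<Rightarrow> 'a set) \<Rightarrow> (nat \<Rightarrow> 'a set) \<Rightarrow> nat \<Rightarrow> (nat set \<Rightarrow> 'a set) \<Rightarrow> bool" where
  "valid_recorded_pairs d P R t pr \<longleftrightarrow>
     (\<forall>i<t. \<forall>j<t. i \<noteq> j \<longrightarrow>
        (\<exists>a b. pr {i, j} = {a, b} \<and>
               ((a \<in> P i \<and> b \<in> R j) \<or> (a \<in> P j \<and> b \<in> R i)) \<and>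
               d a b = rep_weight d P R i j))"

definition multirep_output ::
  "('a \<Rightarrow> 'a \<Rightarrow> real) \<Rightarrow> (nat \<Rightarrow> 'a set) \<Rightarrow> (nat \<Rightarrow> 'a set) \<Rightarrow> nat
    \<Rightarrow> (nat set \<Rightarrow> 'a set) \<Rightarrow> nat set set \<Rightarrow> bool" where
  "multirep_output d P R t pr H \<longleftrightarrow>
     valid_recorded_pairs d P R t pr \<and>
     is_mst {0..<t} (edge_cost (rep_weight d P R)) H"

end

theory Submission
  imports Defs
begin

lemma edge_cost_pair:
  assumes "f u v = f v u"
  shows "edge_cost f {u,v} = f u v"
  unfolding edge_cost_def
proof (rule the_equality)
  show "\<exists>u' v'. {u, v} = {u', v'} \<and> f u v = f u' v'" by blast
next
  fix r assume "\<exists>u' v'. {u, v} = {u', v'} \<and> r = f u' v'"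
  then obtain u' v' where "{u, v} = {u', v'}" "r = f u' v'" by blast
  then show "r = f u v" using assms by (auto simp: doubleton_eq_iff)
qed

lemma metric_sym: "metric_on X d \<Longrightarrow> u \<in> X \<Longrightarrow> v \<in> X \<Longrightarrow> d u v = d v u"
  unfolding metric_on_def by blast

lemma metric_nonneg: "metric_on X d \<Longrightarrow> u \<in> X \<Longrightarrow> v \<in> X \<Longrightarrow> d u v \<ge> 0"
  unfolding metric_on_def by blast

lemma metric_zero: "metric_on X d \<Longrightarrow> u \<in> X \<Longrightarrow> d u u = 0"
  unfolding metric_on_def by blast

lemma metric_tri: "metric_on X d \<Longrightarrow> x \<in> X \<Longrightarrow> y \<in> X \<Longrightarrow> z \<in> X \<Longrightarrow> d x z \<le> d x y + d y z"
  unfolding metric_on_def by blast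

lemma edges_onE:
  assumes "e \<in> edges_on V"
  obtains u v where "u \<in> V" "v \<in> V" "u \<noteq> v" "e = {u,v}"
  using assms unfolding edges_on_def by blast

lemma edges_on_mono: "A \<subseteq> B \<Longrightarrow> edges_on A \<subseteq> edges_on B"
  unfolding edges_on_def by blast

lemma finite_edges_on: "finite V \<Longrightarrow> finite (edges_on V)"
  by (rule finite_subset[of _ "Pow V"]) (auto simp: edges_on_def)

lemma edge_cost_X:
  assumes "metric_on X d" "u \<in> X" "v \<in> X"
  shows "edge_cost d {u,v} = d u v"
  using edge_cost_pair metric_sym[OF assms] by metis

lemma edge_cost_nonneg:
  assumes "metric_on X d" "e \<in> edges_on X"
  shows "edge_cost d e \<ge> 0"
  using assms(2) by (elim edges_onE) (simp add: edge_cost_X[OF assms(1)] metric_nonneg[OF assms(1)])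

lemma weight_nonneg:
  assumes "metric_on X d" "K \<subseteq> edges_on X"
  shows "weight (edge_cost d) K \<ge> 0"
  unfolding weight_def using assms edge_cost_nonneg by (metis sum_nonneg subsetD)

lemma weight_mono:
  assumes "metric_on X d" "K' \<subseteq> edges_on X" "K \<subseteq> K'" "finite K'"
  shows "weight (edge_cost d) K \<le> weight (edge_cost d) K'"
  unfolding weight_def using assms edge_cost_nonneg[OF assms(1)]
  by (intro sum_mono2) (auto simp: subset_iff)

lemma adj_sym: "(x,y) \<in> adj F \<Longrightarrow> (y,x) \<in> adj F"
  by (simp add: adj_def insert_commute)

lemma rtrancl_adj_sym:
  assumes "(x,y) \<in> (adj F)\<^sup>*" shows "(y,x) \<in> (adj F)\<^sup>*"
  using assms
proof (induction rule: rtrancl_induct)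
  case base then show ?case by simp
next
  case (step y z)
  then show ?case using adj_sym by (meson converse_rtrancl_into_rtrancl)
qed

lemma adj_mono: "F \<subseteq> G \<Longrightarrow> adj F \<subseteq> adj G"
  unfolding adj_def by auto

lemma adj_rtrancl_mono: "F \<subseteq> G \<Longrightarrow> (x,y) \<in> (adj F)\<^sup>* \<Longrightarrow> (x,y) \<in> (adj G)\<^sup>*"
  using rtrancl_mono[OF adj_mono] by blast

lemma adj_insert: "adj (insert {u,v} K) = adj K \<union> {(u,v),(v,u)}"
  unfolding adj_def by (auto simp: doubleton_eq_iff)

lemma last_use:
  assumes "(x,r) \<in> (A \<union> B)\<^sup>*"
  shows "(x,r) \<in> A\<^sup>* \<or> (\<exists>y z. (y,z) \<in> B \<and> (z,r) \<in> A\<^sup>*)"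
  using assms
proof (induction rule: rtrancl_induct)
  case base then show ?case by simp
next
  case (step y z)
  then show ?case
    by (metis Un_iff rtrancl.rtrancl_refl rtrancl.rtrancl_into_rtrancl)
qed

lemma reach_in:
  assumes "K \<subseteq> edges_on X" "q \<in> X" "(q,r) \<in> (adj K)\<^sup>*"
  shows "r \<in> X"
  using assms(3)
proof (induction rule: rtrancl_induct)
  case base then show ?case using assms(2) by simp
next
  case (step y z)
  then have "{y,z} \<in> edges_on X" using assms(1) by (auto simp: adj_def)
  then show ?case by (auto simp: edges_on_def doubleton_eq_iff)
qed

lemma const_along:
  assumes "\<forall>(x,y)\<in>R. g x = g y" "(x,y) \<in> R\<^sup>*"
  shows "g x = g y"
  using assms(2) by (induction rule: rtrancl_induct) (use assms(1) in auto)

lemma path_weight: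
  assumes "metric_on X d" "finite K" "K \<subseteq> edges_on X" "q \<in> X" "(q,r) \<in> (adj K)\<^sup>*"
  shows "d q r \<le> weight (edge_cost d) K"
  using assms(2-5)
proof (induction K arbitrary: q rule: finite_psubset_induct)
  case (psubset K)
  have rX: "r \<in> X" using reach_in psubset.prems by metis
  from psubset.prems(3) show ?case
  proof (cases rule: converse_rtranclE)
    case base
    then show ?thesis using metric_zero[OF assms(1) psubset.prems(2)]
      weight_nonneg[OF assms(1) psubset.prems(1)] by simp
  next
    case (step x1)
    define e where "e = {q,x1}"
    have eK: "e \<in> K" using step(1) by (simp add: adj_def e_def)
    then have x1X: "x1 \<in> X" using psubset.prems(1) by (auto simp: e_def edges_on_def doubleton_eq_iff)
    define K' where "K' = K - {e}"
    have KK': "K = insert e K'" using eK K'_def by auto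
    have sub: "K' \<subset> K" using eK K'_def by auto
    have K'E: "K' \<subseteq> edges_on X" using psubset.prems(1) K'_def by auto
    have wK: "weight (edge_cost d) K = d q x1 + weight (edge_cost d) K'"
      unfolding weight_def K'_def using psubset.hyps eK
      by (simp add: sum.remove e_def edge_cost_X[OF assms(1) psubset.prems(2) x1X])
    have wK'K: "weight (edge_cost d) K' \<le> weight (edge_cost d) K"
      using weight_mono[OF assms(1) psubset.prems(1)] sub psubset.hyps by auto
    have dqx: "d q x1 \<ge> 0" using metric_nonneg[OF assms(1) psubset.prems(2) x1X] .
    have "(x1, r) \<in> (adj K' \<union> {(q,x1),(x1,q)})\<^sup>*"
      using step(2) KK' adj_insert e_def by metis
    then have "(x1,r) \<in> (adj K')\<^sup>* \<or> (\<exists>y z. (y,z) \<in> {(q,x1),(x1,q)} \<and> (z,r) \<in> (adj K')\<^sup>*)"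
      by (rule last_use)
    then have "(x1,r) \<in> (adj K')\<^sup>* \<or> (q,r) \<in> (adj K')\<^sup>*" by blast
    then show ?thesis
    proof
      assume "(x1,r) \<in> (adj K')\<^sup>*"
      then have "d x1 r \<le> weight (edge_cost d) K'"
        using psubset.IH[OF sub K'E x1X] by blast
      moreover have "d q r \<le> d q x1 + d x1 r"
        using metric_tri[OF assms(1) psubset.prems(2) x1X rX] .
      ultimately show ?thesis using wK by linarith
    next
      assume "(q,r) \<in> (adj K')\<^sup>*"
      then have "d q r \<le> weight (edge_cost d) K'"
        using psubset.IH[OF sub K'E psubset.prems(2)] by blast
      then show ?thesis using wK'K by linarith
    qed
  qed
qed


definition img_edges :: "('x \<Rightarrow> 'i) \<Rightarrow> 'x set set \<Rightarrow> 'i set set" where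
  "img_edges \<phi> K = (\<lambda>f. \<phi> ` f) ` K"

definition forest_via :: "('x \<Rightarrow> 'i) \<Rightarrow> 'x set set \<Rightarrow> bool" where
  "forest_via \<phi> K \<longleftrightarrow> (\<forall>f\<in>K. \<forall>p q. f = {p,q} \<longrightarrow> (\<phi> p, \<phi> q) \<notin> (adj (img_edges \<phi> (K - {f})))\<^sup>*)"

definition uf_inv where
  "uf_inv I \<phi> c \<omega> a K \<rho> J \<longleftrightarrow>
    (\<forall>x\<in>I. \<rho> x \<in> I \<and> \<rho> (\<rho> x) = \<rho> x \<and> c x \<le> c (\<rho> x) \<and> (x, \<rho> x) \<in> (adj J)\<^sup>*) \<and>
    (\<forall>f\<in>K. \<forall>p q. f = {p,q} \<longrightarrow> \<rho> (\<phi> p) = \<rho> (\<phi> q)) \<and>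
    J \<subseteq> img_edges \<phi> K \<and> J \<subseteq> edges_on I \<and> finite J \<and>
    card {x\<in>I. \<rho> x \<noteq> x} \<le> card K \<and>
    weight \<omega> J \<le> weight a K + (\<Sum>x\<in>{x\<in>I. \<rho> x \<noteq> x}. c x) \<and>
    (forest_via \<phi> K \<longrightarrow> card {x\<in>I. \<rho> x \<noteq> x} = card K)"

lemma img_edges_mono: "A \<subseteq> B \<Longrightarrow> img_edges \<phi> A \<subseteq> img_edges \<phi> B"
  unfolding img_edges_def by auto

lemma forest_mono: "forest_via \<phi> (insert f K) \<Longrightarrow> forest_via \<phi> K"
  unfolding forest_via_def
proof (intro ballI allI impI notI)
  fix g p q
  assume F: "\<forall>h\<in>insert f K. \<forall>p q. h = {p, q} \<longrightarrow> (\<phi> p, \<phi> q) \<notin> (adj (img_edges \<phi> (insert f K - {h})))\<^sup>*"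
    and g: "g \<in> K" "g = {p,q}" and R: "(\<phi> p, \<phi> q) \<in> (adj (img_edges \<phi> (K - {g})))\<^sup>*"
  have "img_edges \<phi> (K - {g}) \<subseteq> img_edges \<phi> (insert f K - {g})" by (rule img_edges_mono) auto
  then have "(\<phi> p, \<phi> q) \<in> (adj (img_edges \<phi> (insert f K - {g})))\<^sup>*" using R by (rule adj_rtrancl_mono)
  moreover have gi: "g \<in> insert f K" using g by simp
  have "\<forall>p q. g = {p, q} \<longrightarrow> (\<phi> p, \<phi> q) \<notin> (adj (img_edges \<phi> (insert f K - {g})))\<^sup>*"
    using bspec[OF F gi] .
  then have "(\<phi> p, \<phi> q) \<notin> (adj (img_edges \<phi> (insert f K - {g})))\<^sup>*" using g(2) by simp
  ultimately show False by contradiction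
qed

lemma uf_inv_parts:
  assumes "uf_inv I \<phi> c \<omega> a K \<rho> J"
  shows "\<forall>x\<in>I. \<rho> x \<in> I \<and> \<rho> (\<rho> x) = \<rho> x \<and> c x \<le> c (\<rho> x) \<and> (x, \<rho> x) \<in> (adj J)\<^sup>*"
    "\<forall>f\<in>K. \<forall>p q. f = {p,q} \<longrightarrow> \<rho> (\<phi> p) = \<rho> (\<phi> q)"
    "J \<subseteq> img_edges \<phi> K" "J \<subseteq> edges_on I" "finite J"
    "card {x\<in>I. \<rho> x \<noteq> x} \<le> card K"
    "weight \<omega> J \<le> weight a K + (\<Sum>x\<in>{x\<in>I. \<rho> x \<noteq> x}. c x)"
    "forest_via \<phi> K \<longrightarrow> card {x\<in>I. \<rho> x \<noteq> x} = card K"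
  using assms unfolding uf_inv_def by - (elim conjE, assumption)+

lemma uf_keep:
  assumes inv: "uf_inv I \<phi> c \<omega> a K \<rho> J"
    and fin: "finite K" and fK: "f \<notin> K" and f: "f = {p,q}" and pI: "\<phi> p \<in> I" and qI: "\<phi> q \<in> I"
    and eq: "\<rho> (\<phi> p) = \<rho> (\<phi> q)" and af: "a f \<ge> 0"
  shows "uf_inv I \<phi> c \<omega> a (insert f K) \<rho> J"
proof -
  note I = uf_inv_parts[OF inv]
  have e: "\<forall>g\<in>insert f K. \<forall>p q. g = {p,q} \<longrightarrow> \<rho> (\<phi> p) = \<rho> (\<phi> q)"
    using I(2) eq f by (auto simp: doubleton_eq_iff)
  have j: "J \<subseteq> img_edges \<phi> (insert f K)" using I(3) img_edges_mono[of K "insert f K"] by blast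
  have cd: "card {x\<in>I. \<rho> x \<noteq> x} \<le> card (insert f K)" using I(6) fin fK by simp
  have w: "weight \<omega> J \<le> weight a (insert f K) + (\<Sum>x\<in>{x\<in>I. \<rho> x \<noteq> x}. c x)"
    using I(7) fin fK af by (simp add: weight_def)
  have nf: "\<not> forest_via \<phi> (insert f K)"
  proof
    assume F: "forest_via \<phi> (insert f K)"
    have p1: "(\<phi> p, \<rho> (\<phi> q)) \<in> (adj J)\<^sup>*" using I(1) pI eq by metis
    have q1: "(\<rho> (\<phi> q), \<phi> q) \<in> (adj J)\<^sup>*" using I(1) qI rtrancl_adj_sym[of "\<phi> q" "\<rho> (\<phi> q)" J] by blast
    have "(\<phi> p, \<phi> q) \<in> (adj J)\<^sup>*" using rtrancl_trans[OF p1 q1] .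
    then have R: "(\<phi> p, \<phi> q) \<in> (adj (img_edges \<phi> K))\<^sup>*" by (rule adj_rtrancl_mono[OF I(3)])
    have KK: "insert f K - {f} = K" using fK by auto
    have "\<forall>g\<in>insert f K. \<forall>p q. g = {p,q} \<longrightarrow> (\<phi> p, \<phi> q) \<notin> (adj (img_edges \<phi> (insert f K - {g})))\<^sup>*"
      using F unfolding forest_via_def .
    then have "(\<phi> p, \<phi> q) \<notin> (adj (img_edges \<phi> (insert f K - {f})))\<^sup>*" using f by blast
    then show False using R KK by simp
  qed
  show ?thesis unfolding uf_inv_def
    by (intro conjI I(1) e j I(4) I(5) cd w) (simp add: nf)
qed

lemma uf_merge:
  assumes inv: "uf_inv I \<phi> c \<omega> a K \<rho> J"
    and fin: "finite K" and finI: "finite I" and fK: "f \<notin> K" and f: "f = {p,q}"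
    and pI: "\<phi> p \<in> I" and qI: "\<phi> q \<in> I"
    and Kp: "\<forall>g\<in>K. \<exists>p q. g = {p,q}"
    and ne: "\<rho> (\<phi> p) \<noteq> \<rho> (\<phi> q)" and cle: "c (\<rho> (\<phi> q)) \<le> c (\<rho> (\<phi> p))"
    and wle: "\<omega> {\<phi> p, \<phi> q} \<le> a {p,q} + c (\<phi> q)"
  shows "\<exists>\<rho>' J'. uf_inv I \<phi> c \<omega> a (insert f K) \<rho>' J'"
proof -
  note I = uf_inv_parts[OF inv]
  define u where "u = \<phi> p"
  define v where "v = \<phi> q"
  have uI: "u \<in> I" and vI: "v \<in> I" using pI qI u_def v_def by auto
  define \<rho>' where "\<rho>' x = (if \<rho> x = \<rho> v then \<rho> u else \<rho> x)" for x
  define J' where "J' = insert {u,v} J"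
  have ne': "\<rho> u \<noteq> \<rho> v" using ne u_def v_def by simp
  have ru: "\<rho> u \<in> I" "\<rho> (\<rho> u) = \<rho> u" "(u, \<rho> u) \<in> (adj J)\<^sup>*" using I(1) uI by auto
  have rv: "\<rho> v \<in> I" "\<rho> (\<rho> v) = \<rho> v" "c v \<le> c (\<rho> v)"
    using I(1) vI by blast+
  have rv3: "(\<rho> v, v) \<in> (adj J)\<^sup>*" using I(1) vI rtrancl_adj_sym[of v "\<rho> v" J] by blast
  have JJ': "J \<subseteq> J'" using J'_def by auto
  have vu: "(v,u) \<in> (adj J')\<^sup>*" by (auto simp: adj_def J'_def insert_commute)
  have A: "\<forall>x\<in>I. \<rho>' x \<in> I \<and> \<rho>' (\<rho>' x) = \<rho>' x \<and> c x \<le> c (\<rho>' x) \<and> (x, \<rho>' x) \<in> (adj J')\<^sup>*"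
  proof
    fix x assume xI: "x \<in> I"
    have x1: "\<rho> x \<in> I" "\<rho> (\<rho> x) = \<rho> x" "c x \<le> c (\<rho> x)" "(x, \<rho> x) \<in> (adj J')\<^sup>*"
      using I(1) xI adj_rtrancl_mono[OF JJ', of x "\<rho> x"] by blast+
    show "\<rho>' x \<in> I \<and> \<rho>' (\<rho>' x) = \<rho>' x \<and> c x \<le> c (\<rho>' x) \<and> (x, \<rho>' x) \<in> (adj J')\<^sup>*"
    proof (cases "\<rho> x = \<rho> v")
      case True
      have "(x, \<rho> u) \<in> (adj J')\<^sup>*"
        using x1(4) True adj_rtrancl_mono[OF JJ' rv3] vu adj_rtrancl_mono[OF JJ' ru(3)]
        by (metis rtrancl_trans)
      moreover have "c x \<le> c (\<rho> u)" using x1(3) True cle u_def v_def by simp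
      ultimately show ?thesis using True ru ne' by (simp add: \<rho>'_def)
    next
      case False
      then show ?thesis using x1 by (simp add: \<rho>'_def)
    qed
  qed
  have B: "\<forall>g\<in>insert f K. \<forall>p q. g = {p,q} \<longrightarrow> \<rho>' (\<phi> p) = \<rho>' (\<phi> q)"
  proof (intro ballI allI impI)
    fix g p' q' assume g: "g \<in> insert f K" "g = {p',q'}"
    show "\<rho>' (\<phi> p') = \<rho>' (\<phi> q')"
    proof (cases "g = f")
      case True
      then have "(p' = p \<and> q' = q) \<or> (p' = q \<and> q' = p)" using g f by (auto simp: doubleton_eq_iff)
      then show ?thesis using ne' ru(2) by (auto simp: \<rho>'_def u_def v_def)
    next
      case False
      then have "\<rho> (\<phi> p') = \<rho> (\<phi> q')" using I(2) g by blast
      then show ?thesis by (simp add: \<rho>'_def)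
    qed
  qed
  have uvimg: "{u,v} = (\<lambda>f. \<phi> ` f) f" using f u_def v_def by simp
  have C: "J' \<subseteq> img_edges \<phi> (insert f K)"
    using I(3) img_edges_mono[of K "insert f K"] uvimg unfolding J'_def
    by (auto simp: img_edges_def)
  have uv: "u \<noteq> v" using ne' by auto
  have D: "J' \<subseteq> edges_on I" using I(4) uI vI uv unfolding J'_def edges_on_def by auto
  have E: "finite J'" using I(5) J'_def by simp
  have notin: "{u,v} \<notin> J"
  proof
    assume "{u,v} \<in> J"
    then obtain g where g: "g \<in> K" "{u,v} = \<phi> ` g" using I(3) unfolding img_edges_def by auto
    then obtain p0 q0 where pq: "g = {p0,q0}" using Kp by blast
    then have "\<rho> (\<phi> p0) = \<rho> (\<phi> q0)" using I(2) g by blast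
    moreover have "{u,v} = {\<phi> p0, \<phi> q0}" using g pq by simp
    ultimately show False using ne' by (auto simp: doubleton_eq_iff)
  qed
  have NR: "{x\<in>I. \<rho>' x \<noteq> x} = insert (\<rho> v) {x\<in>I. \<rho> x \<noteq> x}"
  proof (rule set_eqI)
    fix x
    show "x \<in> {x\<in>I. \<rho>' x \<noteq> x} \<longleftrightarrow> x \<in> insert (\<rho> v) {x\<in>I. \<rho> x \<noteq> x}"
    proof (cases "x \<in> I")
      case xI: True
      have "\<rho> (\<rho> x) = \<rho> x" using I(1) xI by blast
      then show ?thesis using xI ne' ru rv by (auto simp: \<rho>'_def)
    next
      case False
      then show ?thesis using rv(1) by auto
    qed
  qed
  have rvn: "\<rho> v \<notin> {x\<in>I. \<rho> x \<noteq> x}" using rv by simp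
  have finNR: "finite {x\<in>I. \<rho> x \<noteq> x}" using finI by simp
  have F6: "card {x\<in>I. \<rho>' x \<noteq> x} \<le> card (insert f K)"
    using I(6) NR rvn finNR fin fK by simp
  have wJ': "weight \<omega> J' = \<omega> {u,v} + weight \<omega> J"
    unfolding weight_def J'_def using I(5) notin by simp
  have wa: "weight a (insert f K) = a f + weight a K"
    unfolding weight_def using fin fK by simp
  have sNR: "(\<Sum>x\<in>{x\<in>I. \<rho>' x \<noteq> x}. c x) = c (\<rho> v) + (\<Sum>x\<in>{x\<in>I. \<rho> x \<noteq> x}. c x)"
    using NR rvn finNR by simp
  have F7: "weight \<omega> J' \<le> weight a (insert f K) + (\<Sum>x\<in>{x\<in>I. \<rho>' x \<noteq> x}. c x)"
    using wJ' wa sNR I(7) wle rv(3) f u_def v_def by simp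
  have F8: "forest_via \<phi> (insert f K) \<longrightarrow> card {x\<in>I. \<rho>' x \<noteq> x} = card (insert f K)"
    using forest_mono[of \<phi> f K] I(8) NR rvn finNR fin fK by simp
  have "uf_inv I \<phi> c \<omega> a (insert f K) \<rho>' J'"
    unfolding uf_inv_def using A B C D E F6 F7 F8 by blast
  then show ?thesis by blast
qed

lemma uf_exists:
  assumes "finite K" "finite I"
    and "\<forall>f\<in>K. \<exists>p q. f = {p,q} \<and> p \<in> X \<and> q \<in> X" "\<phi> ` X \<subseteq> I" "\<forall>f\<in>K. a f \<ge> 0"
    and "\<forall>p\<in>X. \<forall>q\<in>X. \<phi> p \<noteq> \<phi> q \<longrightarrow> \<omega> {\<phi> p, \<phi> q} \<le> a {p,q} + c (\<phi> q)"
  shows "\<exists>\<rho> J. uf_inv I \<phi> c \<omega> a K \<rho> J"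
  using assms
proof (induction K rule: finite_induct)
  case empty
  have "uf_inv I \<phi> c \<omega> a {} (\<lambda>x. x) {}"
    unfolding uf_inv_def by (simp add: weight_def img_edges_def)
  then show ?case by blast
next
  case (insert f K)
  have "\<forall>f\<in>K. \<exists>p q. f = {p,q} \<and> p \<in> X \<and> q \<in> X" using insert.prems(2) by simp
  moreover have "\<forall>f\<in>K. a f \<ge> 0" using insert.prems(4) by simp
  ultimately have "\<exists>\<rho> J. uf_inv I \<phi> c \<omega> a K \<rho> J"
    using insert.IH insert.prems(1,3,5) by blast
  then obtain \<rho> J where inv: "uf_inv I \<phi> c \<omega> a K \<rho> J" by blast
  obtain p q where f: "f = {p,q}" "p \<in> X" "q \<in> X" using insert.prems(2) by blast
  have pI: "\<phi> p \<in> I" and qI: "\<phi> q \<in> I" using f insert.prems(3) by auto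
  have Kp: "\<forall>g\<in>K. \<exists>p q. g = {p,q}" using insert.prems(2) by blast
  have af: "a f \<ge> 0" using insert.prems(4) by simp
  have H5: "\<forall>p\<in>X. \<forall>q\<in>X. \<phi> p \<noteq> \<phi> q \<longrightarrow> \<omega> {\<phi> p, \<phi> q} \<le> a {p,q} + c (\<phi> q)"
    using insert.prems(5) .
  show ?case
  proof (cases "\<rho> (\<phi> p) = \<rho> (\<phi> q)")
    case True
    have "uf_inv I \<phi> c \<omega> a (insert f K) \<rho> J"
      using uf_keep[OF inv insert.hyps(1,2) f(1) pI qI True af] .
    then show ?thesis by blast
  next
    case ne: False
    then have neq: "\<phi> p \<noteq> \<phi> q" by auto
    show ?thesis
    proof (cases "c (\<rho> (\<phi> q)) \<le> c (\<rho> (\<phi> p))")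
      case True
      have "\<omega> {\<phi> p, \<phi> q} \<le> a {p,q} + c (\<phi> q)" using H5[rule_format, OF f(2) f(3) neq] .
      then show ?thesis using uf_merge[OF inv insert.hyps(1) insert.prems(1) insert.hyps(2) f(1) pI qI Kp ne True]
        by blast
    next
      case False
      have f': "f = {q,p}" using f by auto
      have neq': "\<phi> q \<noteq> \<phi> p" using neq by simp
      have w: "\<omega> {\<phi> q, \<phi> p} \<le> a {q,p} + c (\<phi> p)" using H5[rule_format, OF f(3) f(2) neq'] .
      have c: "c (\<rho> (\<phi> p)) \<le> c (\<rho> (\<phi> q))" using False by simp
      have ne': "\<rho> (\<phi> q) \<noteq> \<rho> (\<phi> p)" using ne by simp
      show ?thesis using uf_merge[OF inv insert.hyps(1) insert.prems(1) insert.hyps(2) f' qI pI Kp ne' c w] .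
    qed
  qed
qed

lemma img_edges_id: "img_edges (\<lambda>x. x) K = K"
  unfolding img_edges_def by simp

lemma conn_remove:
  assumes "connected_by V K" "f \<in> K" "f = {p,q}" "(p,q) \<in> (adj (K - {f}))\<^sup>*"
  shows "connected_by V (K - {f})"
proof -
  have "adj K \<subseteq> (adj (K - {f}))\<^sup>*"
  proof
    fix z assume "z \<in> adj K"
    then obtain x y where z: "z = (x,y)" "{x,y} \<in> K" unfolding adj_def by auto
    show "z \<in> (adj (K - {f}))\<^sup>*"
    proof (cases "{x,y} = f")
      case True
      then have "(x = p \<and> y = q) \<or> (x = q \<and> y = p)" using assms(3) by (auto simp: doubleton_eq_iff)
      then show ?thesis using assms(4) rtrancl_adj_sym[OF assms(4)] z by auto
    next
      case False
      then have "(x,y) \<in> adj (K - {f})" using z unfolding adj_def by auto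
      then show ?thesis using z by auto
    qed
  qed
  then have "(adj K)\<^sup>* \<subseteq> (adj (K - {f}))\<^sup>*"
    by (metis rtrancl_subset_rtrancl)
  then show ?thesis using assms(1) unfolding connected_by_def by blast
qed

lemma spanning_forest:
  assumes "spanning_tree V K"
  shows "forest_via (\<lambda>x. x) K"
  unfolding forest_via_def img_edges_id
proof (intro ballI allI impI notI)
  fix f p q assume f: "f \<in> K" "f = {p,q}" and R: "(p,q) \<in> (adj (K - {f}))\<^sup>*"
  have "connected_by V K" using assms unfolding spanning_tree_def by blast
  then have "connected_by V (K - {f})" using conn_remove f R by metis
  then show False using assms f(1) unfolding spanning_tree_def by blast
qed

lemma uf_simple:
  assumes "finite V" "K \<subseteq> edges_on V"
  shows "\<exists>\<rho> J. uf_inv V (\<lambda>x. x) (\<lambda>_. 0::real) (\<lambda>_. 0::real) (\<lambda>_. 0::real) K \<rho> J"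
proof (rule uf_exists[where X = V])
  show "finite K" using assms finite_edges_on finite_subset by blast
  show "\<forall>f\<in>K. \<exists>p q. f = {p, q} \<and> p \<in> V \<and> q \<in> V" using assms(2) unfolding edges_on_def by blast
qed (use assms in auto)

lemma card_conn:
  assumes "finite V" "V \<noteq> {}" "K \<subseteq> edges_on V" "connected_by V K"
  shows "card V \<le> card K + 1"
proof -
  obtain \<rho> J where inv: "uf_inv V (\<lambda>x. x) (\<lambda>_. 0::real) (\<lambda>_. 0::real) (\<lambda>_. 0::real) K \<rho> J"
    using uf_simple[OF assms(1,3)] by blast
  note I = uf_inv_parts[OF inv]
  obtain v0 where v0: "v0 \<in> V" using assms(2) by blast
  have edge: "\<forall>(x,y)\<in>adj K. \<rho> x = \<rho> y" using I(2) unfolding adj_def by auto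
  have const: "\<rho> x = \<rho> v0" if "x \<in> V" for x
    using const_along[OF edge] assms(4) that v0 unfolding connected_by_def by metis
  have roots: "{x\<in>V. \<rho> x = x} \<subseteq> {\<rho> v0}" using const by auto
  have "card {x\<in>V. \<rho> x = x} \<le> 1"
    using card_mono[OF _ roots] by simp
  moreover have "card V = card {x\<in>V. \<rho> x = x} + card {x\<in>V. \<rho> x \<noteq> x}"
  proof -
    have "V = {x\<in>V. \<rho> x = x} \<union> {x\<in>V. \<rho> x \<noteq> x}" by auto
    moreover have "card ({x\<in>V. \<rho> x = x} \<union> {x\<in>V. \<rho> x \<noteq> x}) = card {x\<in>V. \<rho> x = x} + card {x\<in>V. \<rho> x \<noteq> x}"
      by (rule card_Un_disjoint) (use assms(1) in auto)
    ultimately show ?thesis by simp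
  qed
  ultimately show ?thesis using I(6) by linarith
qed

lemma card_tree:
  assumes "finite V" "V \<noteq> {}" "spanning_tree V K"
  shows "card K + 1 = card V"
proof -
  have KE: "K \<subseteq> edges_on V" and C: "connected_by V K" using assms(3) unfolding spanning_tree_def by auto
  obtain \<rho> J where inv: "uf_inv V (\<lambda>x. x) (\<lambda>_. 0::real) (\<lambda>_. 0::real) (\<lambda>_. 0::real) K \<rho> J"
    using uf_simple[OF assms(1) KE] by blast
  note I = uf_inv_parts[OF inv]
  have eq: "card {x\<in>V. \<rho> x \<noteq> x} = card K" using I(8) spanning_forest[OF assms(3)] by blast
  obtain v0 where v0: "v0 \<in> V" using assms(2) by blast
  have "\<rho> v0 \<in> {x\<in>V. \<rho> x = x}" using I(1) v0 by auto
  then have "card {x\<in>V. \<rho> x = x} \<ge> 1" using assms(1)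
    by (metis (no_types, lifting) One_nat_def Suc_leI card_gt_0_iff empty_iff finite_subset mem_Collect_eq subsetI)
  moreover have "card V = card {x\<in>V. \<rho> x = x} + card {x\<in>V. \<rho> x \<noteq> x}"
  proof -
    have "V = {x\<in>V. \<rho> x = x} \<union> {x\<in>V. \<rho> x \<noteq> x}" by auto
    moreover have "card ({x\<in>V. \<rho> x = x} \<union> {x\<in>V. \<rho> x \<noteq> x}) = card {x\<in>V. \<rho> x = x} + card {x\<in>V. \<rho> x \<noteq> x}"
      by (rule card_Un_disjoint) (use assms(1) in auto)
    ultimately show ?thesis by simp
  qed
  ultimately have "card V \<ge> card K + 1" using eq by linarith
  moreover have "card V \<le> card K + 1" using card_conn[OF assms(1,2) KE C] .
  ultimately show ?thesis by linarith
qed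

lemma exists_spanning:
  assumes "finite V" "G \<subseteq> edges_on V" "connected_by V G"
  shows "\<exists>K\<subseteq>G. spanning_tree V K"
proof -
  have finG: "finite G" using assms finite_edges_on finite_subset by blast
  obtain K where K: "K \<subseteq> G \<and> connected_by V K" and min: "\<forall>K'. K' \<subseteq> G \<and> connected_by V K' \<longrightarrow> card K \<le> card K'"
    using ex_has_least_nat[of "\<lambda>K. K \<subseteq> G \<and> connected_by V K" G card] assms(3) by blast
  have finK: "finite K" using K finG finite_subset by blast
  have "spanning_tree V K"
    unfolding spanning_tree_def
  proof (intro conjI ballI notI)
    show "K \<subseteq> edges_on V" using K assms(2) by blast
    show "connected_by V K" using K by blast
  next
    fix e assume e: "e \<in> K" "connected_by V (K - {e})"
    then have "card K \<le> card (K - {e})" using min K by blast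
    moreover have "card (K - {e}) < card K" using e finK by (meson card_Diff1_less)
    ultimately show False by linarith
  qed
  then show ?thesis using K by blast
qed

lemma final_arith:
  fixes A B W s :: real
  assumes "B > 0" "B \<le> A" "B \<le> W" "s \<le> 2*A + W - B"
  shows "s \<le> 2 * (A / B) * W"
proof -
  have "0 \<le> (W - B) * (2*A - B)" using assms by (intro mult_nonneg_nonneg) auto
  then have "(2*A + W - B) * B \<le> 2*A*W" by (simp add: algebra_simps)
  then have "2*A + W - B \<le> 2*A*W / B" using assms(1) by (simp add: pos_le_divide_eq)
  then show ?thesis using assms(4) by simp
qed

lemma Min_img_le: "finite A \<Longrightarrow> p \<in> A \<Longrightarrow> Min ((\<lambda>x. f x) ` A) \<le> (f p :: real)"
  by (rule Min_le) auto

lemma setdist_single: "setdist d A {b} = Min ((\<lambda>x. d x b) ` A)"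
  unfolding setdist_def by (rule arg_cong[where f = Min]) auto

lemma rep_weight_sym: "rep_weight d P R i j = rep_weight d P R j i"
  unfolding rep_weight_def by (simp add: min.commute)

lemma edges_on_subset: "e \<in> edges_on V \<Longrightarrow> e \<subseteq> V"
  unfolding edges_on_def by auto

theorem corollary1:
  fixes X :: "'a set" and d :: "'a \<Rightarrow> 'a \<Rightarrow> real"
    and t :: nat and P :: "nat \<Rightarrow> 'a set" and T :: "nat \<Rightarrow> 'a set set"
    and r :: "nat \<Rightarrow> 'a" and pr :: "nat set \<Rightarrow> 'a set" and H :: "nat set set"
  assumes "finite X" and "metric_on X d"
    and "\<forall>i<t. P i \<noteq> {}"
    and "\<forall>i<t. \<forall>j<t. i \<noteq> j \<longrightarrow> P i \<inter> P j = {}"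
    and "(\<Union>i<t. P i) = X"
    and "\<forall>i<t. spanning_tree (P i) (T i)"
    and "\<forall>i<t. r i \<in> P i"
    and "multirep_output d P (\<lambda>i. {r i}) t pr H"
  shows "spanning_tree X ((\<Union>i<t. T i) \<union> pr ` H) \<and> (\<Union>i<t. T i) \<subseteq> (\<Union>i<t. T i) \<union> pr ` H
     \<and> (\<forall>F. spanning_tree X F \<and> (\<Union>i<t. T i) \<subseteq> F \<longrightarrow>
           weight (edge_cost d) ((\<Union>i<t. T i) \<union> pr ` H) \<le> 2 * weight (edge_cost d) F)
     \<and> (Max {weight (edge_cost d) (intra_edges P t M) | M. is_mst X (edge_cost d) M} > 0 \<longrightarrow>
         (\<forall>M. is_mst X (edge_cost d) M \<longrightarrow>
           weight (edge_cost d) ((\<Union>i<t. T i) \<union> pr ` H)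
             \<le> 2 * overlap X d P t (\<Union>i<t. T i) * weight (edge_cost d) M))"
proof -
  note finX = assms(1) and met = assms(2) and Pne = assms(3) and Pdisj = assms(4)
    and Pcov = assms(5) and Tsp = assms(6) and rP = assms(7)
  define E where "E = (\<Union>i<t. T i)"
  define S where "S = E \<union> pr ` H"
  define om where "om = edge_cost (rep_weight d P (\<lambda>i. {r i}))"
  define a where "a = edge_cost d"
  define phi where "phi x = (SOME i. i < t \<and> x \<in> P i)" for x
  have valid: "valid_recorded_pairs d P (\<lambda>i. {r i}) t pr" and Hmst: "is_mst {0..<t} om H"
    using assms(8) unfolding multirep_output_def om_def by auto
  have PX: "P i \<subseteq> X" if "i < t" for i using Pcov that by blast
  have finP: "finite (P i)" if "i < t" for i using PX[OF that] finX finite_subset by blast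
  have phi: "phi x < t \<and> x \<in> P (phi x)" if "x \<in> X" for x
  proof -
    have "\<exists>i. i < t \<and> x \<in> P i" using Pcov that by blast
    then show ?thesis unfolding phi_def by (rule someI_ex)
  qed
  have phi_eq: "phi x = i" if "i < t" "x \<in> P i" for x i
  proof -
    have "x \<in> X" using PX that by blast
    then have "phi x < t" "x \<in> P (phi x)" using phi by auto
    then show ?thesis using Pdisj that by blast
  qed
  have TE: "T i \<subseteq> edges_on (P i)" and Tc: "connected_by (P i) (T i)" if "i < t" for i
    using Tsp that unfolding spanning_tree_def by auto
  have TX: "T i \<subseteq> edges_on X" if "i < t" for i using TE[OF that] edges_on_mono[OF PX[OF that]] by (rule subset_trans)
  have finT: "finite (T i)" if "i < t" for i
    using finite_subset[OF TE[OF that] finite_edges_on[OF finP[OF that]]] .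
  have EX: "E \<subseteq> edges_on X" unfolding E_def using TX by (intro UN_least) simp
  have finE: "finite E" unfolding E_def using finT by (intro finite_UN_I) auto
  have Epart: "\<exists>k<t. e \<subseteq> P k" if eE: "e \<in> E" for e
  proof -
    obtain k where k: "k < t" "e \<in> T k" using eE unfolding E_def by blast
    then have "e \<in> edges_on (P k)" using TE by blast
    then show ?thesis using k edges_on_subset by blast
  qed
  have Tdisj: "T i \<inter> T j = {}" if ij: "i < t" "j < t" "i \<noteq> j" for i j
  proof (rule ccontr)
    assume "T i \<inter> T j \<noteq> {}"
    then obtain e where e: "e \<in> T i" "e \<in> T j" by blast
    have e1: "e \<in> edges_on (P i)" using TE[OF ij(1)] e(1) by blast
    have e2: "e \<subseteq> P j" using TE[OF ij(2)] e(2) edges_on_subset by blast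
    obtain u v where "e = {u,v}" "u \<in> P i" using e1 by (elim edges_onE) blast
    then have "u \<in> P i \<inter> P j" using e2 by blast
    then show False using Pdisj ij by blast
  qed
  have Tpath: "(x,y) \<in> (adj (T i))\<^sup>*" if "i < t" "x \<in> P i" "y \<in> P i" for i x y
    using Tc[OF that(1)] that unfolding connected_by_def by blast
  have HE: "H \<subseteq> edges_on {0..<t}" and Hc: "connected_by {0..<t} H"
    using Hmst unfolding is_mst_def spanning_tree_def by auto
  have finH: "finite H" using finite_subset[OF HE finite_edges_on[of "{0..<t}"]] by simp
  have prH: "\<exists>i j x y. h = {i,j} \<and> i < t \<and> j < t \<and> i \<noteq> j \<and> pr h = {x,y} \<and> x \<in> P i \<and> y \<in> P j
      \<and> d x y = rep_weight d P (\<lambda>i. {r i}) i j" if hH: "h \<in> H" for h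
  proof -
    obtain i j where ij: "h = {i,j}" "i < t" "j < t" "i \<noteq> j"
      using HE hH unfolding edges_on_def by auto
    have "\<exists>x y. pr {i, j} = {x, y} \<and> (x \<in> P i \<and> y \<in> {r j} \<or> x \<in> P j \<and> y \<in> {r i}) \<and>
               d x y = rep_weight d P (\<lambda>i. {r i}) i j"
      using valid ij(2-4) unfolding valid_recorded_pairs_def by blast
    then obtain x y where xy: "pr {i,j} = {x,y}" "(x \<in> P i \<and> y \<in> {r j}) \<or> (x \<in> P j \<and> y \<in> {r i})"
      "d x y = rep_weight d P (\<lambda>i. {r i}) i j"
      by blast
    show ?thesis
    proof (cases "x \<in> P i \<and> y \<in> {r j}")
      case True
      then have "y \<in> P j" using rP ij(3) by simp
      then show ?thesis using ij xy(1,3) True by blast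
    next
      case False
      then have a1: "x \<in> P j" "y = r i" using xy(2) by auto
      then have a2: "y \<in> P i" using rP ij(2) by simp
      have a3: "h = {j,i}" using ij(1) by auto
      have a4: "d x y = rep_weight d P (\<lambda>i. {r i}) j i" using xy(3) rep_weight_sym by metis
      have "pr h = {x,y}" using ij(1) xy(1) by simp
      then show ?thesis using a1(1) a2 a3 a4 ij(2-4) by blast
    qed
  qed
  have a_pair: "a {x,y} = d x y" if "x \<in> X" "y \<in> X" for x y
    unfolding a_def using edge_cost_X[OF met that] .
  have om_pair: "om {i,j} = rep_weight d P (\<lambda>i. {r i}) i j" for i j
    unfolding om_def by (rule edge_cost_pair) (rule rep_weight_sym)
  have rw_nonneg: "rep_weight d P (\<lambda>i. {r i}) i j \<ge> 0" if ij: "i < t" "j < t" for i j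
  proof -
    have "setdist d (P k) {r l} \<ge> 0" if kl: "k < t" "l < t" for k l
    proof -
      have "\<forall>x\<in>P k. 0 \<le> d x (r l)" using metric_nonneg[OF met] PX kl rP by blast
      then show ?thesis unfolding setdist_single using finP[OF kl(1)] Pne kl(1)
        by (simp add: Min_ge_iff)
    qed
    then show ?thesis unfolding rep_weight_def using ij by simp
  qed
  have om_nonneg: "om e \<ge> 0" if "e \<in> edges_on {0..<t}" for e
    using that rw_nonneg om_pair by (elim edges_onE) auto
  define idx where "idx e = {k. k < t \<and> e \<inter> P k \<noteq> {}}" for e
  have prdata: "pr h \<in> edges_on X \<and> pr h \<notin> E \<and> a (pr h) = om h \<and> idx (pr h) = h" if hH: "h \<in> H" for h
  proof -
    obtain i j x y where D: "h = {i,j}" "i < t" "j < t" "i \<noteq> j" "pr h = {x,y}" "x \<in> P i" "y \<in> P j"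
      "d x y = rep_weight d P (\<lambda>i. {r i}) i j" using prH[OF hH] by blast
    have xX: "x \<in> X" and yX: "y \<in> X" using PX D by auto
    have px: "phi x = i" and py: "phi y = j" using phi_eq D by auto
    have xy: "x \<noteq> y" using px py D(4) by auto
    have e1: "pr h \<in> edges_on X" using xX yX xy D(5) unfolding edges_on_def by blast
    have e2: "pr h \<notin> E"
    proof
      assume "pr h \<in> E"
      then obtain k where "k < t" "pr h \<subseteq> P k" using Epart by blast
      then have "phi x = k" "phi y = k" using phi_eq D(5) by auto
      then show False using px py D(4) by simp
    qed
    have e3: "a (pr h) = om h" using D(1,5,8) a_pair[OF xX yX] om_pair by simp
    have e4: "idx (pr h) = h"
    proof (rule set_eqI)
      fix k
      have "k \<in> idx (pr h) \<longleftrightarrow> k < t \<and> (x \<in> P k \<or> y \<in> P k)" unfolding idx_def D(5) by auto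
      also have "\<dots> \<longleftrightarrow> k = i \<or> k = j" using phi_eq px py D by metis
      finally show "k \<in> idx (pr h) \<longleftrightarrow> k \<in> h" using D(1) by simp
    qed
    show ?thesis using e1 e2 e3 e4 by blast
  qed
  have inj: "inj_on pr H"
  proof (rule inj_onI)
    fix h1 h2 assume "h1 \<in> H" "h2 \<in> H" "pr h1 = pr h2"
    then show "h1 = h2" using prdata by metis
  qed
  have prX: "pr ` H \<subseteq> edges_on X" using prdata by blast
  have finpr: "finite (pr ` H)" using finH by simp
  have disj: "E \<inter> pr ` H = {}" using prdata by blast
  have SX: "S \<subseteq> edges_on X" unfolding S_def using EX prX by blast
  have finS: "finite S" unfolding S_def using finE finpr by simp
  have wS: "weight a S = weight a E + weight om H"
  proof -
    have "weight a S = sum a E + sum a (pr ` H)"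
      unfolding weight_def S_def by (rule sum.union_disjoint[OF finE finpr disj])
    moreover have "sum a (pr ` H) = sum (a \<circ> pr) H" by (rule sum.reindex[OF inj])
    moreover have "sum (a \<circ> pr) H = sum om H" using prdata by (intro sum.cong) auto
    ultimately show ?thesis unfolding weight_def by simp
  qed
  have TS: "T i \<subseteq> S" if "i < t" for i unfolding S_def E_def using that by blast
  have connS: "connected_by X S"
    unfolding connected_by_def
  proof (intro ballI)
    fix x y assume xX: "x \<in> X" and yX: "y \<in> X"
    have px: "phi x < t" "x \<in> P (phi x)" and py: "phi y < t" "y \<in> P (phi y)" using phi xX yX by auto
    have H1: "(phi x, phi y) \<in> (adj H)\<^sup>*" using Hc px py unfolding connected_by_def by simp
    have gen: "\<forall>z\<in>P j'. (x,z) \<in> (adj S)\<^sup>*" if R: "(phi x, j') \<in> (adj H)\<^sup>*" for j'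
      using R
    proof (induction rule: rtrancl_induct)
      case base
      show ?case
      proof
        fix z assume "z \<in> P (phi x)"
        then have "(x,z) \<in> (adj (T (phi x)))\<^sup>*" using Tpath px by blast
        then show "(x,z) \<in> (adj S)\<^sup>*" using adj_rtrancl_mono[OF TS[OF px(1)]] by blast
      qed
    next
      case (step j1 j2)
      have hH: "{j1,j2} \<in> H" using step(2) unfolding adj_def by simp
      then have j2t: "j2 < t" using HE unfolding edges_on_def by (auto simp: doubleton_eq_iff)
      obtain i' j' x' y' where D: "{j1,j2} = {i',j'}" "pr {j1,j2} = {x',y'}" "x' \<in> P i'" "y' \<in> P j'"
        using prH[OF hH] by blast
      have "\<exists>u w. u \<in> P j1 \<and> w \<in> P j2 \<and> {u,w} \<in> S"
      proof (cases "i' = j1")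
        case True
        then have "j' = j2" using D(1) by (auto simp: doubleton_eq_iff)
        then show ?thesis using True D hH unfolding S_def by (metis UnI2 image_eqI)
      next
        case False
        then have "i' = j2" "j' = j1" using D(1) by (auto simp: doubleton_eq_iff)
        moreover have "{y',x'} \<in> S" using D(2) hH unfolding S_def by (metis UnI2 image_eqI insert_commute)
        ultimately show ?thesis using D by blast
      qed
      then obtain u w where uw: "u \<in> P j1" "w \<in> P j2" "{u,w} \<in> S" by blast
      show ?case
      proof
        fix z assume z: "z \<in> P j2"
        have "(x,u) \<in> (adj S)\<^sup>*" using step.IH uw(1) by blast
        moreover have "(u,w) \<in> adj S" using uw(3) unfolding adj_def by simp
        moreover have "(w,z) \<in> (adj S)\<^sup>*"
          using adj_rtrancl_mono[OF TS[OF j2t] Tpath[OF j2t uw(2) z]] .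
        ultimately show "(x,z) \<in> (adj S)\<^sup>*" by (meson rtrancl_into_rtrancl rtrancl_trans)
      qed
    qed
    show "(x,y) \<in> (adj S)\<^sup>*" using gen[OF H1] py by blast
  qed
  have minS: "\<forall>e\<in>S. \<not> connected_by X (S - {e})"
  proof (cases "t = 0")
    case True
    then have "X = {}" using Pcov by simp
    then have "S = {}" using SX unfolding edges_on_def by blast
    then show ?thesis by simp
  next
    case False
    then have t0: "0 < t" by simp
    have Xne: "X \<noteq> {}" using PX[OF t0] Pne t0 by blast
    have cE: "card E = (\<Sum>i<t. card (T i))"
      unfolding E_def by (rule card_UN_disjoint) (use finT Tdisj in auto)
    have cX: "card X = (\<Sum>i<t. card (P i))"
      unfolding Pcov[symmetric] by (rule card_UN_disjoint) (use finP Pdisj in auto)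
    have cTP: "card (T i) + 1 = card (P i)" if "i < t" for i
      using card_tree[OF finP[OF that]] Pne Tsp that by blast
    have cH: "card H + 1 = t"
      using card_tree[of "{0..<t}" H] t0 Hmst unfolding is_mst_def by simp
    have cS: "card S = card E + card H"
      unfolding S_def using card_Un_disjoint[OF finE finpr disj] card_image[OF inj] by simp
    have "(\<Sum>i<t. card (P i)) = (\<Sum>i<t. card (T i) + 1)" using cTP by (intro sum.cong) auto
    also have "\<dots> = (\<Sum>i<t. card (T i)) + t"
      using sum.distrib[of "\<lambda>i. card (T i)" "\<lambda>i. 1" "{..<t}"] by simp
    finally have cSX: "card S + 1 = card X" using cE cX cH cS by linarith
    show ?thesis
    proof (intro ballI notI)
      fix e assume e: "e \<in> S" and c: "connected_by X (S - {e})"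
      have "card X \<le> card (S - {e}) + 1" using card_conn[OF finX Xne _ c] SX by blast
      moreover have "card (S - {e}) + 1 = card S" using e finS
        by (metis One_nat_def Suc_pred card_Diff_singleton card_gt_0_iff empty_iff add.commute plus_1_eq_Suc)
      ultimately show False using cSX by linarith
    qed
  qed
  have part1: "spanning_tree X S" unfolding spanning_tree_def using SX connS minS by blast
  have wE: "weight a E = (\<Sum>i\<in>{0..<t}. weight a (T i))"
    unfolding weight_def E_def atLeast0LessThan
    by (rule sum.UNION_disjoint) (use finT Tdisj in auto)
  have core: "weight om H \<le> weight a F' + weight a E"
    if F': "finite F'" "F' \<subseteq> edges_on X" "connected_by X (E \<union> F')" for F'
  proof -
    define c where "c i = weight a (T i)" for i
    have cnn: "c i \<ge> 0" if "i < t" for i unfolding c_def a_def using weight_nonneg[OF met TX[OF that]] .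
    have bound: "\<forall>p\<in>X. \<forall>q\<in>X. phi p \<noteq> phi q \<longrightarrow> om {phi p, phi q} \<le> a {p,q} + c (phi q)"
    proof (intro ballI impI)
      fix p q assume pX: "p \<in> X" and qX: "q \<in> X" and ne: "phi p \<noteq> phi q"
      have pp: "phi p < t" "p \<in> P (phi p)" and qq: "phi q < t" "q \<in> P (phi q)" using phi pX qX by auto
      have rX: "r (phi q) \<in> X" using rP qq PX by blast
      have "om {phi p, phi q} = rep_weight d P (\<lambda>i. {r i}) (phi p) (phi q)" by (rule om_pair)
      also have "\<dots> \<le> setdist d (P (phi p)) {r (phi q)}" unfolding rep_weight_def by (rule min.cobounded1)
      also have "\<dots> = Min ((\<lambda>x. d x (r (phi q))) ` P (phi p))" by (rule setdist_single)
      also have "\<dots> \<le> d p (r (phi q))" 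
        by (rule Min_img_le[OF finP[OF pp(1)] pp(2)])
      also have "\<dots> \<le> d p q + d q (r (phi q))" by (rule metric_tri[OF met pX qX rX])
      also have "\<dots> \<le> a {p,q} + c (phi q)"
      proof -
        have rq: "r (phi q) \<in> P (phi q)" using rP qq(1) by blast
        have "d q (r (phi q)) \<le> weight (edge_cost d) (T (phi q))"
          using path_weight[OF met finT[OF qq(1)] TX[OF qq(1)] qX Tpath[OF qq(1) qq(2) rq]] .
        moreover have "a {p,q} = d p q" using a_pair[OF pX qX] .
        ultimately show ?thesis unfolding c_def a_def by simp
      qed
      finally show "om {phi p, phi q} \<le> a {p,q} + c (phi q)" .
    qed
    have h3: "\<forall>f\<in>F'. \<exists>p q. f = {p,q} \<and> p \<in> X \<and> q \<in> X" using F'(2) unfolding edges_on_def by blast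
    have h4: "phi ` X \<subseteq> {0..<t}" using phi by auto
    have h5: "\<forall>f\<in>F'. a f \<ge> 0" using F'(2) edge_cost_nonneg[OF met] unfolding a_def by blast
    obtain \<rho> J where inv: "uf_inv {0..<t} phi c om a F' \<rho> J"
      using uf_exists[OF F'(1) _ h3 h4 h5 bound] by blast
    note I = uf_inv_parts[OF inv]
    have edge: "\<forall>(x,y)\<in>adj (E \<union> F'). \<rho> (phi x) = \<rho> (phi y)"
    proof (intro ballI, clarify)
      fix x y assume "(x,y) \<in> adj (E \<union> F')"
      then have xy: "{x,y} \<in> E \<union> F'" unfolding adj_def by simp
      show "\<rho> (phi x) = \<rho> (phi y)"
      proof (cases "{x,y} \<in> E")
        case True
        then obtain k where "k < t" "{x,y} \<subseteq> P k" using Epart by blast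
        then have "phi x = k" "phi y = k" using phi_eq by auto
        then show ?thesis by simp
      next
        case False
        then have "{x,y} \<in> F'" using xy by blast
        then show ?thesis using I(2) by blast
      qed
    qed
    have rconst: "\<rho> i = \<rho> j" if ij: "i < t" "j < t" for i j
    proof -
      obtain x y where x: "x \<in> P i" and y: "y \<in> P j" using Pne ij by blast
      have "x \<in> X" "y \<in> X" using PX ij x y by auto
      then have R: "(x,y) \<in> (adj (E \<union> F'))\<^sup>*" using F'(3) unfolding connected_by_def by blast
      have "\<rho> (phi x) = \<rho> (phi y)"
        using R
      proof (induction rule: rtrancl_induct)
        case base then show ?case by simp
      next
        case (step y z)
        have "\<rho> (phi y) = \<rho> (phi z)" using edge step(2) by blast
        then show ?case using step(3) by simp
      qed
      moreover have "phi x = i" "phi y = j" using phi_eq ij x y by auto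
      ultimately show ?thesis by simp
    qed
    have Jc: "connected_by {0..<t} J"
      unfolding connected_by_def
    proof (intro ballI)
      fix i j assume i: "i \<in> {0..<t}" and j: "j \<in> {0..<t}"
      have a1: "(i, \<rho> i) \<in> (adj J)\<^sup>*" using I(1) i by blast
      have "(j, \<rho> j) \<in> (adj J)\<^sup>*" using I(1) j by blast
      then have a2: "(\<rho> j, j) \<in> (adj J)\<^sup>*" by (rule rtrancl_adj_sym)
      have a3: "\<rho> i = \<rho> j" using i j by (intro rconst) auto
      show "(i,j) \<in> (adj J)\<^sup>*" using rtrancl_trans[OF a1 a2[folded a3]] .
    qed
    obtain J' where J': "J' \<subseteq> J" "spanning_tree {0..<t} J'"
      using exists_spanning[OF _ I(4) Jc] by blast
    have "weight om H \<le> weight om J'" using Hmst J'(2) unfolding is_mst_def by blast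
    also have "\<dots> \<le> weight om J"
      unfolding weight_def using I(5) J'(1) I(4) om_nonneg by (intro sum_mono2) auto
    also have "\<dots> \<le> weight a F' + (\<Sum>x\<in>{x\<in>{0..<t}. \<rho> x \<noteq> x}. c x)" by (rule I(7))
    also have "\<dots> \<le> weight a F' + (\<Sum>x\<in>{0..<t}. c x)"
    proof -
      have "(\<Sum>x\<in>{x\<in>{0..<t}. \<rho> x \<noteq> x}. c x) \<le> (\<Sum>x\<in>{0..<t}. c x)"
        by (rule sum_mono2) (use cnn in auto)
      then show ?thesis by simp
    qed
    also have "(\<Sum>x\<in>{0..<t}. c x) = weight a E" unfolding wE c_def ..
    finally show ?thesis .
  qed
  have part3: "\<forall>F. spanning_tree X F \<and> E \<subseteq> F \<longrightarrow> weight a S \<le> 2 * weight a F"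
  proof (intro allI impI, elim conjE)
    fix F assume F: "spanning_tree X F" and EF: "E \<subseteq> F"
    have FX: "F \<subseteq> edges_on X" and Fc: "connected_by X F" using F unfolding spanning_tree_def by auto
    have finF: "finite F" using finite_subset[OF FX finite_edges_on[OF finX]] .
    have "E \<union> (F - E) = F" using EF by blast
    then have "weight om H \<le> weight a (F - E) + weight a E"
      using core[of "F - E"] finF FX Fc by auto
    moreover have "weight a F = weight a (F - E) + weight a E"
      unfolding weight_def using sum.subset_diff[OF EF finF] .
    moreover have "weight a (F - E) \<ge> 0" unfolding a_def using weight_nonneg[OF met] FX by blast
    ultimately show "weight a S \<le> 2 * weight a F" using wS by linarith
  qed
  have part4: "Max {weight a (intra_edges P t M) | M. is_mst X a M} > 0 \<longrightarrow>
      (\<forall>M. is_mst X a M \<longrightarrow> weight a S \<le> 2 * overlap X d P t E * weight a M)"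
  proof (intro impI allI)
    fix M assume Bpos0: "Max {weight a (intra_edges P t M) | M. is_mst X a M} > 0" and M: "is_mst X a M"
    define Bs where "Bs = {weight a (intra_edges P t M) | M. is_mst X a M}"
    have Bs_eq: "Bs = (\<lambda>M. weight a (intra_edges P t M)) ` {M. is_mst X a M}" unfolding Bs_def by blast
    have "{M. is_mst X a M} \<subseteq> Pow (edges_on X)" unfolding is_mst_def spanning_tree_def by blast
    then have "finite {M. is_mst X a M}" using finite_edges_on[OF finX] by (meson finite_Pow_iff finite_subset)
    then have finBs: "finite Bs" unfolding Bs_eq by simp
    have Bsne: "Bs \<noteq> {}" unfolding Bs_def using M by blast
    define B where "B = Max Bs"
    have "B \<in> Bs" unfolding B_def using Max_in[OF finBs Bsne] .
    then obtain M0 where M0: "is_mst X a M0" "weight a (intra_edges P t M0) = B" unfolding Bs_def by blast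
    have Bpos: "B > 0" using Bpos0 unfolding B_def Bs_def .
    define A where "A = weight a E"
    define W where "W = weight a M0"
    have WM: "weight a M = W" unfolding W_def using M M0(1) unfolding is_mst_def by (meson order_antisym)
    have M0X: "M0 \<subseteq> edges_on X" and M0c: "connected_by X M0"
      using M0(1) unfolding is_mst_def spanning_tree_def by auto
    have finM0: "finite M0" using finite_subset[OF M0X finite_edges_on[OF finX]] .
    define F' where "F' = M0 - intra_edges P t M0"
    have isub: "intra_edges P t M0 \<subseteq> M0" unfolding intra_edges_def by blast
    have F'X: "F' \<subseteq> edges_on X" using M0X unfolding F'_def by blast
    have finF': "finite F'" using finM0 unfolding F'_def by simp
    have EF'X: "E \<union> F' \<subseteq> edges_on X" using EX F'X by blast
    have connF: "connected_by X (E \<union> F')"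
    proof -
      have "adj M0 \<subseteq> (adj (E \<union> F'))\<^sup>*"
      proof
        fix z assume "z \<in> adj M0"
        then obtain u w where z: "z = (u,w)" "{u,w} \<in> M0" unfolding adj_def by auto
        show "z \<in> (adj (E \<union> F'))\<^sup>*"
        proof (cases "{u,w} \<in> intra_edges P t M0")
          case True
          then obtain k where k: "k < t" "{u,w} \<subseteq> P k" unfolding intra_edges_def by blast
          have uk: "u \<in> P k" "w \<in> P k" using k(2) by auto
          have Tk: "T k \<subseteq> E \<union> F'" unfolding E_def using k(1) by blast
          have "(u,w) \<in> (adj (E \<union> F'))\<^sup>*" using adj_rtrancl_mono[OF Tk Tpath[OF k(1) uk]] .
          then show ?thesis using z(1) by simp
        next
          case False
          then have "{u,w} \<in> E \<union> F'" using z unfolding F'_def by blast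
          then show ?thesis using z unfolding adj_def by auto
        qed
      qed
      then have "(adj M0)\<^sup>* \<subseteq> (adj (E \<union> F'))\<^sup>*" by (metis rtrancl_subset_rtrancl)
      then show ?thesis using M0c unfolding connected_by_def by blast
    qed
    have c1: "weight om H \<le> weight a F' + A" unfolding A_def using core[OF finF' F'X connF] .
    have c2: "W = weight a F' + B"
      unfolding W_def M0(2)[symmetric] F'_def weight_def using sum.subset_diff[OF isub finM0] .
    have F'nn: "weight a F' \<ge> 0" unfolding a_def using weight_nonneg[OF met F'X] .
    have BA: "B \<le> A"
    proof -
      obtain K where K: "K \<subseteq> E \<union> F'" "spanning_tree X K" using exists_spanning[OF finX EF'X connF] by blast
      have "W \<le> weight a K" unfolding W_def using M0(1) K(2) unfolding is_mst_def by blast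
      also have "\<dots> \<le> weight a (E \<union> F')" unfolding a_def
        using weight_mono[OF met EF'X K(1)] finE finF' by simp
      also have "\<dots> \<le> A + weight a F'"
      proof -
        have "weight a (E \<union> F') = A + weight a F' - weight a (E \<inter> F')"
          unfolding weight_def A_def using sum_Un[OF finE finF'] by simp
        moreover have "weight a (E \<inter> F') \<ge> 0" unfolding a_def using weight_nonneg[OF met] EX by blast
        ultimately show ?thesis by linarith
      qed
      finally show ?thesis using c2 by linarith
    qed
    have BW: "B \<le> W" using c2 F'nn by linarith
    have sb: "weight a S \<le> 2*A + W - B" using wS c1 c2 unfolding A_def by linarith
    have ov: "overlap X d P t E = A / B"
      unfolding overlap_def A_def B_def Bs_def a_def ..
    show "weight a S \<le> 2 * overlap X d P t E * weight a M"
      unfolding ov WM using final_arith[OF Bpos BA BW sb] .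
  qed
  have part2: "E \<subseteq> S" unfolding S_def by blast
  show ?thesis using part1 part2 part3 part4 unfolding S_def E_def a_def by blast
qed

end
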